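(* Let $\widehat{G}$ be a signed separable bigraph which contains no signed graph in $\mathcal{C}\cup D$ as an induced subgraph. Suppose that a vertex set $S$ minimally separates components $H$ and $H'$ of $\widehat G-S$. Then (i) $S$ induces a positive biclique in $\widehat{G}$, and (ii) any two vertices of $S$ in the same part of the bipartition of $\widehat{G}$ have a common neighbour in $H$ and a common neighbour in $H'$.
   Context: A signed graph is a finite simple graph each of whose edges is assigned a sign, positive or negative. A signed bigraph is a signed graph whose underlying graph is bipartite. A bigraph is separable if it contains an induced $2K_2$. An induced subgraph is obtained by deleting vertices only; $\widehat G$ contains $H$ as an induced subgraph if some induced subgraph is isomorphic to $H$ via a sign-preserving isomorphism. A signed graph is positive if all edges are positive and non-trivial if it has at least one edge. In a bigraph with bipartition $(X,Y)$, a subgraph $H$ is a biclique if every vertex of $V(H)\cap X$ is adjacent to every vertex of $V(H)\cap Y$. For a vertex set $S$ of $\widehat G$ and two distinct non-trivial connected components $H,H'$ of $\widehat G-S$, $S$ minimally separates $H$ and $H'$ if every vertex of $S$ has a neighbour in $H$ and a neighbour in $H'$. $\mathcal C$ is the set of all signed cycles of length $2k$ with $k\ge 3$ (all sign assignments). $D$ is the set of signed graphs on parts $\{a_1,a_2,a_3\}$, $\{b_1,b_2,b_3\}$ with edges exactly $a_1b_1,a_1b_2,a_2b_1,a_2b_2,a_2b_3,a_3b_2,a_3b_3$ (a 6-cycle $a_1b_1a_2b_3a_3b_2a_1$ plus the chord $a_2b_2$), where $a_2b_2$ is negative and the other six edges have arbitrary signs. *)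

theory Defs
  imports Main
begin

text \<open>A signed graph on vertex set V: E is the (symmetric, irreflexive) adjacency
relation, sg x y is the sign of the edge xy (True = positive, False = negative).\<close>

definition signed_bigraph ::
  "'a set \<Rightarrow> 'a set \<Rightarrow> 'a set \<Rightarrow> ('a \<Rightarrow> 'a \<Rightarrow> bool) \<Rightarrow> ('a \<Rightarrow> 'a \<Rightarrow> bool) \<Rightarrow> bool" where
  "signed_bigraph V X Y E sg \<longleftrightarrow>
     finite V \<and> V = X \<union> Y \<and> X \<inter> Y = {} \<and>
     (\<forall>x y. E x y \<longrightarrow> x \<in> V \<and> y \<in> V \<and> x \<noteq> y \<and> E y x \<and> sg x y = sg y x) \<and>
     (\<forall>x y. E x y \<longrightarrow> (x \<in> X \<longleftrightarrow> y \<in> Y))"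

text \<open>Contains an induced 2K_2.\<close>
definition separable :: "'a set \<Rightarrow> ('a \<Rightarrow> 'a \<Rightarrow> bool) \<Rightarrow> bool" where
  "separable V E \<longleftrightarrow> (\<exists>a b c d. a \<in> V \<and> b \<in> V \<and> c \<in> V \<and> d \<in> V \<and>
      distinct [a, b, c, d] \<and> E a b \<and> E c d \<and>
      \<not> E a c \<and> \<not> E a d \<and> \<not> E b c \<and> \<not> E b d)"

text \<open>Contains an induced (signed) cycle of length 2k, k \<ge> 3 (any signs): a member of C.\<close>
definition has_induced_long_even_cycle :: "'a set \<Rightarrow> ('a \<Rightarrow> 'a \<Rightarrow> bool) \<Rightarrow> bool" where
  "has_induced_long_even_cycle V E \<longleftrightarrow> (\<exists>vs k. k \<ge> 3 \<and> length vs = 2 * k \<and> distinct vs \<and>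
      set vs \<subseteq> V \<and>
      (\<forall>i < length vs. \<forall>j < length vs.
          E (vs ! i) (vs ! j) \<longleftrightarrow> (j = Suc i mod length vs \<or> i = Suc j mod length vs)))"

text \<open>Contains an induced member of D: the 6-cycle a1 b1 a2 b3 a3 b2 a1 plus the chord a2 b2,
with a2 b2 negative and other signs arbitrary.\<close>
definition has_induced_D :: "'a set \<Rightarrow> ('a \<Rightarrow> 'a \<Rightarrow> bool) \<Rightarrow> ('a \<Rightarrow> 'a \<Rightarrow> bool) \<Rightarrow> bool" where
  "has_induced_D V E sg \<longleftrightarrow> (\<exists>a1 a2 a3 b1 b2 b3.
      {a1, a2, a3, b1, b2, b3} \<subseteq> V \<and> distinct [a1, a2, a3, b1, b2, b3] \<and>
      E a1 b1 \<and> E a1 b2 \<and> E a2 b1 \<and> E a2 b2 \<and> E a2 b3 \<and> E a3 b2 \<and> E a3 b3 \<and>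
      \<not> E a1 b3 \<and> \<not> E a3 b1 \<and>
      \<not> E a1 a2 \<and> \<not> E a1 a3 \<and> \<not> E a2 a3 \<and>
      \<not> E b1 b2 \<and> \<not> E b1 b3 \<and> \<not> E b2 b3 \<and>
      \<not> sg a2 b2)"

definition reach_in :: "'a set \<Rightarrow> ('a \<Rightarrow> 'a \<Rightarrow> bool) \<Rightarrow> 'a \<Rightarrow> 'a \<Rightarrow> bool" where
  "reach_in W E = (\<lambda>x y. x \<in> W \<and> y \<in> W \<and> E x y)\<^sup>*\<^sup>*"

definition is_component :: "'a set \<Rightarrow> ('a \<Rightarrow> 'a \<Rightarrow> bool) \<Rightarrow> 'a set \<Rightarrow> bool" where
  "is_component W E C \<longleftrightarrow> (\<exists>u \<in> W. C = {v. reach_in W E u v})"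

definition nontrivial :: "('a \<Rightarrow> 'a \<Rightarrow> bool) \<Rightarrow> 'a set \<Rightarrow> bool" where
  "nontrivial E C \<longleftrightarrow> (\<exists>x \<in> C. \<exists>y \<in> C. E x y)"

definition minimally_separates ::
  "'a set \<Rightarrow> ('a \<Rightarrow> 'a \<Rightarrow> bool) \<Rightarrow> 'a set \<Rightarrow> 'a set \<Rightarrow> 'a set \<Rightarrow> bool" where
  "minimally_separates V E S H H' \<longleftrightarrow>
     S \<subseteq> V \<and>
     is_component (V - S) E H \<and> is_component (V - S) E H' \<and> H \<noteq> H' \<and>
     nontrivial E H \<and> nontrivial E H' \<and>
     (\<forall>s \<in> S. (\<exists>h \<in> H. E s h) \<and> (\<exists>h \<in> H'. E s h))"

definition positive_biclique ::
  "'a set \<Rightarrow> 'a set \<Rightarrow> ('a \<Rightarrow> 'a \<Rightarrow> bool) \<Rightarrow> ('a \<Rightarrow> 'a \<Rightarrow> bool) \<Rightarrow> 'a set \<Rightarrow> bool" where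
  "positive_biclique X Y E sg S \<longleftrightarrow>
     (\<forall>x \<in> S \<inter> X. \<forall>y \<in> S \<inter> Y. E x y) \<and>
     (\<forall>x \<in> S. \<forall>y \<in> S. E x y \<longrightarrow> sg x y)"

end

theory Submission
  imports Defs
begin

definition walk :: "('a \<Rightarrow> 'a \<Rightarrow> bool) \<Rightarrow> 'a list \<Rightarrow> bool" where
  "walk E p \<longleftrightarrow> (\<forall>k. Suc k < length p \<longrightarrow> E (p!k) (p!Suc k))"

definition pre_path :: "('a \<Rightarrow> 'a \<Rightarrow> bool) \<Rightarrow> 'a set \<Rightarrow> 'a \<Rightarrow> 'a \<Rightarrow> 'a list \<Rightarrow> bool" where
  "pre_path E W x y p \<longleftrightarrow> walk E p \<and> 3 \<le> length p \<and> p!0 = x \<and> p!(length p - 1) = y \<and>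
     (\<forall>k. 0 < k \<and> k < length p - 1 \<longrightarrow> p!k \<in> W)"

definition ipath :: "('a \<Rightarrow> 'a \<Rightarrow> bool) \<Rightarrow> 'a set \<Rightarrow> 'a \<Rightarrow> 'a \<Rightarrow> 'a list \<Rightarrow> bool" where
  "ipath E W x y p \<longleftrightarrow> pre_path E W x y p \<and> distinct p \<and>
     (\<forall>i j. i < j \<and> j < length p \<and> \<not>(i = 0 \<and> j = length p - 1) \<longrightarrow> (E (p!i) (p!j) \<longleftrightarrow> j = Suc i))"

lemma shortcut:
  assumes pp: "pre_path E W x y p" and ij: "i < j" "j < length p" "1 \<le> i + (length p - 1 - j)"
    and e: "E (p!i) (p!j)"
  shows "pre_path E W x y (take (Suc i) p @ drop j p)"
proof -
  let ?q = "take (Suc i) p @ drop j p"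
  have len: "length ?q = Suc i + (length p - j)" using ij by simp
  have nth: "?q ! k = (if k \<le> i then p!k else p!(j + k - Suc i))" if "k < length ?q" for k
    using ij that by (auto simp: nth_append)
  have w: "walk E p" and l3: "3 \<le> length p" and p0: "p!0 = x" and pl: "p!(length p - 1) = y"
    and int: "\<And>k. 0 < k \<Longrightarrow> k < length p - 1 \<Longrightarrow> p!k \<in> W"
    using pp unfolding pre_path_def by auto
  have "walk E ?q"
    unfolding walk_def
  proof (intro allI impI)
    fix k assume k: "Suc k < length ?q"
    consider "k < i" | "k = i" | "k > i" by linarith
    then show "E (?q!k) (?q!Suc k)"
    proof cases
      case 1 then show ?thesis using k nth[of k] nth[of "Suc k"] w ij unfolding walk_def by auto
    next
      case 2 then show ?thesis using k nth[of k] nth[of "Suc k"] e by auto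
    next
      case 3
      have a: "?q!k = p!(j + k - Suc i)" using nth[of k] k 3 by auto
      have eq: "j + Suc k - Suc i = Suc (j + k - Suc i)" using 3 ij by linarith
      have b: "?q!Suc k = p!Suc (j + k - Suc i)" using nth[of "Suc k"] k 3 eq
        by (simp del: add_Suc_right)
      have "Suc (j + k - Suc i) < length p" using k len 3 ij by linarith
      then show ?thesis using a b w unfolding walk_def by auto
    qed
  qed
  moreover have "3 \<le> length ?q" using len ij by linarith
  moreover have "?q!0 = x" using nth[of 0] p0 len ij by auto
  moreover have "?q!(length ?q - 1) = y"
  proof -
    have "?q!(length ?q - 1) = p!(j + (length ?q - 1) - Suc i)" using nth[of "length ?q - 1"] len ij
      by auto
    also have "j + (length ?q - 1) - Suc i = length p - 1" using len ij by linarith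
    finally show ?thesis using pl by simp
  qed
  moreover have "?q!k \<in> W" if "0 < k" "k < length ?q - 1" for k
  proof (cases "k \<le> i")
    case True then show ?thesis using nth[of k] that int[of k] ij len by auto
  next
    case False
    have "j + k - Suc i < length p - 1" "0 < j + k - Suc i" using False that len ij by linarith+
    then show ?thesis using nth[of k] that int False len by auto
  qed
  ultimately show ?thesis unfolding pre_path_def by blast
qed

lemma walk_append:
  assumes "walk E xs" "walk E ys" "xs \<noteq> []" "ys \<noteq> []" "E (xs!(length xs - 1)) (ys!0)"
  shows "walk E (xs @ ys)"
  unfolding walk_def
proof (intro allI impI)
  fix k assume k: "Suc k < length (xs @ ys)"
  consider "Suc k < length xs" | "Suc k = length xs" | "Suc k > length xs" by linarith
  then show "E ((xs@ys)!k) ((xs@ys)!Suc k)"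
  proof cases
    case 1 then show ?thesis using assms(1) by (auto simp: nth_append walk_def)
  next
    case 2 then have "k = length xs - 1" by simp
    then show ?thesis using assms(5) 2 by (auto simp: nth_append)
  next
    case 3
    have "Suc (k - length xs) = Suc k - length xs" using 3 by linarith
    moreover have "Suc (k - length xs) < length ys" using 3 k by simp
    ultimately show ?thesis using assms(2) 3 k unfolding walk_def
      by (auto simp: nth_append) (metis)
  qed
qed

lemma walk_single: "walk E [a]" by (simp add: walk_def)

lemma reach_walk:
  assumes "reach_in W E a b"
  shows "\<exists>p. p \<noteq> [] \<and> p!0 = a \<and> p!(length p - 1) = b \<and> walk E p \<and> (\<forall>z\<in>set p. reach_in W E a z)"
  using assms unfolding reach_in_def
proof (induction rule: rtranclp_induct)
  case base
  then show ?case by (auto intro!: exI[of _ "[a]"] simp: walk_def)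
next
  case (step y z)
  then obtain p where p: "p \<noteq> []" "p!0 = a" "p!(length p - 1) = y" "walk E p"
    "\<forall>z\<in>set p. (\<lambda>x y. x \<in> W \<and> y \<in> W \<and> E x y)\<^sup>*\<^sup>* a z" by blast
  have "walk E (p @ [z])" using walk_append[OF p(4) walk_single] p step(2) by auto
  moreover have "(p@[z])!0 = a" using p by (auto simp: nth_append)
  moreover have "(p@[z])!(length (p@[z]) - 1) = z" by simp
  moreover have "\<forall>w\<in>set (p@[z]). (\<lambda>x y. x \<in> W \<and> y \<in> W \<and> E x y)\<^sup>*\<^sup>* a w"
    using p(5) rtranclp.rtrancl_into_rtrancl[OF step(1) step(2)] by auto
  ultimately show ?case by (intro exI[of _ "p@[z]"]) auto
qed

lemma exists_ipath:
  assumes "x \<noteq> y" "x \<notin> W" "y \<notin> W" "E x a" "E b y" "walk E q" "q \<noteq> []" "q!0 = a"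
    "q!(length q - 1) = b" "set q \<subseteq> W"
  shows "\<exists>p. ipath E W x y p"
proof -
  let ?p0 = "x # q @ [y]"
  have wq: "walk E (q @ [y])" using walk_append[OF assms(6) walk_single] assms by auto
  have "walk E ?p0" using walk_append[OF walk_single wq] assms by (auto simp: nth_append)
  moreover have "\<forall>k. 0 < k \<and> k < length ?p0 - 1 \<longrightarrow> ?p0!k \<in> W"
  proof (intro allI impI)
    fix k assume k: "0 < k \<and> k < length ?p0 - 1"
    then obtain k' where "k = Suc k'" "k' < length q" by (cases k) auto
    then show "?p0!k \<in> W" using assms(10) by (auto simp: nth_append)
  qed
  ultimately have "pre_path E W x y ?p0" using assms(7) unfolding pre_path_def by (cases q) (auto simp: nth_append)
  then obtain p where pp: "pre_path E W x y p" and mn: "\<And>r. pre_path E W x y r \<Longrightarrow> length p \<le> length r"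
    using ex_has_least_nat[of "pre_path E W x y" ?p0 length] by blast
  have w: "walk E p" and l3: "3 \<le> length p" and p0: "p!0 = x" and pl: "p!(length p - 1) = y"
    and int: "\<And>k. 0 < k \<Longrightarrow> k < length p - 1 \<Longrightarrow> p!k \<in> W"
    using pp unfolding pre_path_def by auto
  have chord: False if "i < j" "j < length p" "1 \<le> i + (length p - 1 - j)" "E (p!i) (p!j)" "Suc i < j" for i j
  proof -
    have "pre_path E W x y (take (Suc i) p @ drop j p)" using shortcut[OF pp that(1-4)] .
    from mn[OF this] that show False by simp
  qed
  have dist: "distinct p"
  proof (rule ccontr)
    assume "\<not> distinct p"
    then obtain i j where ij: "i < j" "j < length p" "p!i = p!j"
      by (metis distinct_conv_nth linorder_neqE_nat)
    have "i \<noteq> 0"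
    proof
      assume "i = 0"
      then have "p!j = x" using p0 ij by simp
      moreover have "j = length p - 1 \<or> p!j \<in> W" using int[of j] ij `i = 0` by linarith
      ultimately show False using assms(1-2) pl by auto
    qed
    have "j \<noteq> length p - 1"
    proof
      assume "j = length p - 1"
      then have "p!i = y" using pl ij by simp
      moreover have "p!i \<in> W" using int[of i] ij `i \<noteq> 0` `j = length p - 1` by linarith
      ultimately show False using assms(3) by auto
    qed
    have "E (p!(i-1)) (p!j)" using w ij `i \<noteq> 0` unfolding walk_def
      by (metis Suc_pred' bot_nat_0.not_eq_extremum order_less_trans)
    have "pre_path E W x y (take (Suc (i-1)) p @ drop j p)"
      using shortcut[OF pp _ ij(2) _ `E (p!(i-1)) (p!j)`] ij `i \<noteq> 0` `j \<noteq> length p - 1` by simp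
    from mn[OF this] ij `i \<noteq> 0` show False by simp
  qed
  have "\<forall>i j. i < j \<and> j < length p \<and> \<not>(i = 0 \<and> j = length p - 1) \<longrightarrow> (E (p!i) (p!j) \<longleftrightarrow> j = Suc i)"
  proof (intro allI impI)
    fix i j assume ij: "i < j \<and> j < length p \<and> \<not>(i = 0 \<and> j = length p - 1)"
    show "E (p!i) (p!j) \<longleftrightarrow> j = Suc i"
    proof
      assume "E (p!i) (p!j)"
      have "1 \<le> i + (length p - 1 - j)" using ij by auto
      show "j = Suc i"
      proof (rule ccontr)
        assume "j \<noteq> Suc i" then have "Suc i < j" using ij by linarith
        then show False using chord[of i j] ij `E (p!i) (p!j)` `1 \<le> i + (length p - 1 - j)` by blast
      qed
    next
      assume "j = Suc i" then show "E (p!i) (p!j)" using w ij unfolding walk_def by auto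
    qed
  qed
  then show ?thesis using pp dist unfolding ipath_def by blast
qed

lemma walk_parity:
  assumes "walk E p" "\<forall>a b. E a b \<longrightarrow> (a\<in>X \<longleftrightarrow> b\<notin>X)"
  shows "k < length p \<Longrightarrow> (p!k \<in> X \<longleftrightarrow> (p!0 \<in> X \<longleftrightarrow> even k))"
proof (induction k)
  case 0 then show ?case by simp
next
  case (Suc k)
  then have "E (p!k) (p!Suc k)" using assms(1) unfolding walk_def by auto
  then show ?case using Suc assms(2) by auto
qed

lemma cyc_condition:
  assumes n3: "3 \<le> length vs" and sym: "\<forall>a b. E a b \<longrightarrow> E b a" and irr: "\<forall>a. \<not> E a a"
    and lt: "\<forall>i j. i < j \<and> j < length vs \<longrightarrow> (E (vs!i) (vs!j) \<longleftrightarrow> (j = Suc i \<or> (i = 0 \<and> j = length vs - 1)))"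
  shows "\<forall>i < length vs. \<forall>j < length vs. E (vs!i) (vs!j) \<longleftrightarrow> (j = Suc i mod length vs \<or> i = Suc j mod length vs)"
proof -
  let ?n = "length vs"
  have key: "(j = Suc i mod ?n \<or> i = Suc j mod ?n) \<longleftrightarrow> (j = Suc i \<or> (i = 0 \<and> j = ?n - 1))"
    if "i < j" "j < ?n" for i j
  proof -
    have a: "Suc i mod ?n = Suc i" using that by simp
    have b: "i = Suc j mod ?n \<longleftrightarrow> (i = 0 \<and> j = ?n - 1)"
    proof (cases "Suc j = ?n")
      case True then show ?thesis by auto
    next
      case False then have "Suc j mod ?n = Suc j" using that by simp
      then show ?thesis using that False by auto
    qed
    show ?thesis using a b by auto
  qed
  show ?thesis
  proof (intro allI impI)
    fix i j assume i: "i < ?n" and j: "j < ?n"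
    consider "i < j" | "i = j" | "j < i" by linarith
    then show "E (vs!i) (vs!j) \<longleftrightarrow> (j = Suc i mod ?n \<or> i = Suc j mod ?n)"
    proof cases
      case 1
      have "E (vs!i) (vs!j) \<longleftrightarrow> (j = Suc i \<or> (i = 0 \<and> j = ?n - 1))" using lt 1 j by blast
      then show ?thesis using key[OF 1 j] by simp
    next
      case 2
      have "Suc i mod ?n \<noteq> i"
      proof (cases "Suc i = ?n")
        case True then show ?thesis using n3 by auto
      next
        case False then show ?thesis using i by simp
      qed
      then show ?thesis using 2 irr by auto
    next
      case 3
      have "E (vs!j) (vs!i) \<longleftrightarrow> (i = Suc j \<or> (j = 0 \<and> i = ?n - 1))" using lt 3 i by blast
      moreover have "E (vs!i) (vs!j) \<longleftrightarrow> E (vs!j) (vs!i)" using sym by blast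
      ultimately show ?thesis using key[OF 3 i] by (simp add: disj_commute)
    qed
  qed
qed

lemma mk_cycle:
  assumes "6 \<le> length vs" "even (length vs)" "distinct vs" "set vs \<subseteq> V"
    and sym: "\<forall>a b. E a b \<longrightarrow> E b a" and irr: "\<forall>a. \<not> E a a"
    and lt: "\<forall>i j. i < j \<and> j < length vs \<longrightarrow> (E (vs!i) (vs!j) \<longleftrightarrow> (j = Suc i \<or> (i = 0 \<and> j = length vs - 1)))"
  shows "has_induced_long_even_cycle V E"
proof -
  have c: "\<forall>i < length vs. \<forall>j < length vs. E (vs!i) (vs!j) \<longleftrightarrow> (j = Suc i mod length vs \<or> i = Suc j mod length vs)"
    using cyc_condition[OF _ sym irr lt] assms(1) by simp
  obtain k where k: "length vs = 2 * k" using assms(2) by blast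
  have "3 \<le> k" using k assms(1) by linarith
  then show ?thesis unfolding has_induced_long_even_cycle_def
    apply (intro exI[of _ vs] exI[of _ k])
    using c k assms(3,4) by simp
qed

lemma cycle_closed:
  assumes ip: "ipath E W x y p" and e: "E x y" and ev: "even (length p)" and l6: "6 \<le> length p"
    and V: "set p \<subseteq> V" and sym: "\<forall>a b. E a b \<longrightarrow> E b a" and irr: "\<forall>a. \<not> E a a"
  shows "has_induced_long_even_cycle V E"
proof (rule mk_cycle[OF l6 ev _ V sym irr])
  show "distinct p" using ip unfolding ipath_def by auto
  have p0: "p!0 = x" and pl: "p!(length p - 1) = y" using ip unfolding ipath_def pre_path_def by auto
  have I: "\<forall>i j. i < j \<and> j < length p \<and> \<not>(i = 0 \<and> j = length p - 1) \<longrightarrow> (E (p!i) (p!j) \<longleftrightarrow> j = Suc i)"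
    using ip unfolding ipath_def by auto
  show "\<forall>i j. i < j \<and> j < length p \<longrightarrow> (E (p!i) (p!j) \<longleftrightarrow> (j = Suc i \<or> (i = 0 \<and> j = length p - 1)))"
  proof (intro allI impI)
    fix i j assume ij: "i < j \<and> j < length p"
    show "E (p!i) (p!j) \<longleftrightarrow> (j = Suc i \<or> (i = 0 \<and> j = length p - 1))"
    proof (cases "i = 0 \<and> j = length p - 1")
      case True then show ?thesis using p0 pl e by auto
    next
      case False then show ?thesis using I ij by blast
    qed
  qed
qed

lemma glue:
  assumes ip: "ipath E W1 x y p" and iq: "ipath E W2 y x q" and nxy: "\<not> E x y"
    and disj: "W1 \<inter> W2 = {}" and noe: "\<forall>u\<in>W1. \<forall>v\<in>W2. \<not> E u v"
    and xW: "x \<notin> W1" "x \<notin> W2" and yW: "y \<notin> W1" "y \<notin> W2"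
    and ev: "even (length p + length q)" and l8: "8 \<le> length p + length q"
    and V: "W1 \<subseteq> V" "W2 \<subseteq> V" "x \<in> V" "y \<in> V"
    and sym: "\<forall>a b. E a b \<longrightarrow> E b a" and irr: "\<forall>a. \<not> E a a"
  shows "has_induced_long_even_cycle V E"
proof -
  define a where "a = length p - 1"
  define b where "b = length q - 1"
  let ?vs = "butlast p @ butlast q"
  have l3: "3 \<le> length p" "3 \<le> length q" using ip iq unfolding ipath_def pre_path_def by auto
  have p0: "p!0 = x" and pa: "p!a = y" and q0: "q!0 = y" and qb: "q!b = x"
    using ip iq unfolding ipath_def pre_path_def a_def b_def by auto
  have pint: "\<And>k. 0 < k \<Longrightarrow> k < a \<Longrightarrow> p!k \<in> W1" using ip unfolding ipath_def pre_path_def a_def by auto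
  have qint: "\<And>k. 0 < k \<Longrightarrow> k < b \<Longrightarrow> q!k \<in> W2" using iq unfolding ipath_def pre_path_def b_def by auto
  have pI: "\<And>i j. i < j \<Longrightarrow> j \<le> a \<Longrightarrow> \<not>(i = 0 \<and> j = a) \<Longrightarrow> (E (p!i) (p!j) \<longleftrightarrow> j = Suc i)"
  proof -
    fix i j assume "i < j" "j \<le> a" "\<not>(i = 0 \<and> j = a)"
    moreover have "\<forall>i j. i < j \<and> j < length p \<and> \<not>(i = 0 \<and> j = length p - 1) \<longrightarrow> (E (p!i) (p!j) \<longleftrightarrow> j = Suc i)"
      using ip unfolding ipath_def by blast
    moreover have "j < length p" using \<open>j \<le> a\<close> l3 unfolding a_def by linarith
    ultimately show "E (p!i) (p!j) \<longleftrightarrow> j = Suc i" unfolding a_def by blast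
  qed
  have qI: "\<And>i j. i < j \<Longrightarrow> j \<le> b \<Longrightarrow> \<not>(i = 0 \<and> j = b) \<Longrightarrow> (E (q!i) (q!j) \<longleftrightarrow> j = Suc i)"
  proof -
    fix i j assume "i < j" "j \<le> b" "\<not>(i = 0 \<and> j = b)"
    moreover have "\<forall>i j. i < j \<and> j < length q \<and> \<not>(i = 0 \<and> j = length q - 1) \<longrightarrow> (E (q!i) (q!j) \<longleftrightarrow> j = Suc i)"
      using iq unfolding ipath_def by blast
    moreover have "j < length q" using \<open>j \<le> b\<close> l3 unfolding b_def by linarith
    ultimately show "E (q!i) (q!j) \<longleftrightarrow> j = Suc i" unfolding b_def by blast
  qed
  have len: "length ?vs = a + b" using l3 unfolding a_def b_def by simp
  have vi: "\<And>i. i < a + b \<Longrightarrow> ?vs!i = (if i < a then p!i else q!(i-a))"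
    using l3 unfolding a_def b_def by (auto simp: nth_append nth_butlast)
  have xy: "x \<noteq> y"
  proof -
    have "distinct p" using ip unfolding ipath_def by blast
    moreover have "a < length p" "0 < a" "0 < length p" using l3 unfolding a_def by auto
    ultimately have "p!0 \<noteq> p!a" using nth_eq_iff_index_eq[of p 0 a] by fastforce
    then show ?thesis using p0 pa by simp
  qed
  have sp: "set (butlast p) \<subseteq> insert x W1"
  proof
    fix z assume "z \<in> set (butlast p)"
    then obtain k where "k < a" "z = p!k" using l3 unfolding a_def
      by (auto simp: in_set_conv_nth nth_butlast)
    then show "z \<in> insert x W1" using pint p0 by (cases k) auto
  qed
  have sq: "set (butlast q) \<subseteq> insert y W2"
  proof
    fix z assume "z \<in> set (butlast q)"
    then obtain k where "k < b" "z = q!k" using l3 unfolding b_def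
      by (auto simp: in_set_conv_nth nth_butlast)
    then show "z \<in> insert y W2" using qint q0 by (cases k) auto
  qed
  have "distinct ?vs"
  proof -
    have "distinct (butlast p)" "distinct (butlast q)" using ip iq unfolding ipath_def
      by (auto simp: distinct_butlast)
    moreover have "set (butlast p) \<inter> set (butlast q) = {}" using sp sq xy xW yW disj by blast
    ultimately show ?thesis by simp
  qed
  moreover have "set ?vs \<subseteq> V" using sp sq V by auto
  moreover have LT: "\<forall>i j. i < j \<and> j < length ?vs \<longrightarrow> (E (?vs!i) (?vs!j) \<longleftrightarrow> (j = Suc i \<or> (i = 0 \<and> j = length ?vs - 1)))"
  proof (intro allI impI)
    fix i j assume ij: "i < j \<and> j < length ?vs"
    then have i: "i < j" and j: "j < a + b" using len by auto
    have a2: "2 \<le> a" "2 \<le> b" using l3 unfolding a_def b_def by auto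
    have goal: "E (?vs!i) (?vs!j) \<longleftrightarrow> (j = Suc i \<or> (i = 0 \<and> j = a + b - 1))"
    proof -
      consider "j < a" | "a \<le> i" | "i < a" "a \<le> j" by linarith
      then show ?thesis
      proof cases
        case 1
        have e1: "?vs!i = p!i" "?vs!j = p!j" using vi[of i] vi[of j] 1 i j by auto
        have "E (p!i) (p!j) \<longleftrightarrow> j = Suc i" using pI[of i j] 1 i by simp
        moreover have "j \<noteq> a + b - 1" using 1 a2 by linarith
        ultimately show ?thesis using e1 by simp
      next
        case 2
        have e1: "?vs!i = q!(i-a)" "?vs!j = q!(j-a)" using vi[of i] vi[of j] 2 i j by auto
        have "E (q!(i-a)) (q!(j-a)) \<longleftrightarrow> j - a = Suc (i - a)" 
        proof -
          have "i - a < j - a" "j - a \<le> b" "j - a \<noteq> b" using 2 i j by linarith+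
          then show ?thesis using qI[of "i-a" "j-a"] by blast
        qed
        moreover have "j - a = Suc (i - a) \<longleftrightarrow> j = Suc i" using 2 i by linarith
        moreover have "i \<noteq> 0" using 2 a2 by linarith
        ultimately show ?thesis using e1 by simp
      next
        case 3
        consider "i = 0" "j = a" | "i = 0" "a < j" | "0 < i" "j = a" | "0 < i" "a < j" using 3 by linarith
        then show ?thesis
        proof cases
          case 1
          have e1: "?vs!i = x" "?vs!j = y" using vi[of i] vi[of j] 1 j p0 q0 a2 by auto
          have "j \<noteq> Suc i" "j \<noteq> a + b - 1" using 1 a2 by linarith+
          then show ?thesis using e1 nxy by simp
        next
          case 2
          have e1: "?vs!i = x" "?vs!j = q!(j-a)" using vi[of i] vi[of j] 2 j p0 a2 by auto
          have "E (q!(j-a)) (q!b) \<longleftrightarrow> b = Suc (j - a)" using qI[of "j-a" b] 2 j by simp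
          moreover have "E x (q!(j-a)) \<longleftrightarrow> E (q!(j-a)) x" using sym by blast
          moreover have "b = Suc (j - a) \<longleftrightarrow> j = a + b - 1" using 2 j by linarith
          moreover have "j \<noteq> Suc i" using 2 a2 by linarith
          ultimately show ?thesis using e1 qb 2 by simp
        next
          case 3
          have e1: "?vs!i = p!i" "?vs!j = p!a" using vi[of i] vi[of j] 3 \<open>i < a\<close> j pa q0 by auto
          have "E (p!i) (p!a) \<longleftrightarrow> a = Suc i" using pI[of i a] 3 \<open>i < a\<close> by simp
          then show ?thesis using e1 3 by simp
        next
          case 4
          have e1: "?vs!i = p!i" "?vs!j = q!(j-a)" using vi[of i] vi[of j] 4 \<open>i < a\<close> j by auto
          have "p!i \<in> W1" using pint 4 \<open>i < a\<close> by auto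
          moreover have "q!(j-a) \<in> W2" using qint 4 j by auto
          ultimately have "\<not> E (p!i) (q!(j-a))" using noe by blast
          moreover have "j \<noteq> Suc i" using 4 \<open>i < a\<close> by linarith
          ultimately show ?thesis using e1 4 by simp
        qed
      qed
    qed
    then show "E (?vs!i) (?vs!j) \<longleftrightarrow> (j = Suc i \<or> (i = 0 \<and> j = length ?vs - 1))" using len by simp
  qed
  moreover have "6 \<le> length ?vs" "even (length ?vs)" using len l8 ev l3 unfolding a_def b_def by auto
  ultimately show ?thesis using mk_cycle[OF _ _ _ _ sym irr LT] by blast
qed


lemma ipathD:
  assumes "ipath E W x y p"
  shows "walk E p" "3 \<le> length p" "p!0 = x" "p!(length p - 1) = y"
    "\<And>k. 0 < k \<Longrightarrow> k < length p - 1 \<Longrightarrow> p!k \<in> W" "distinct p"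
  using assms unfolding ipath_def pre_path_def by blast+

lemma reach_sym:
  assumes sym: "\<forall>a b. E a b \<longrightarrow> E b a" and r: "reach_in W E a b"
  shows "reach_in W E b a"
  using r unfolding reach_in_def
proof (induction rule: rtranclp_induct)
  case base then show ?case by simp
next
  case (step y z)
  then have "(\<lambda>x y. x \<in> W \<and> y \<in> W \<and> E x y) z y" using sym by blast
  then show ?case using step(3) by (rule converse_rtranclp_into_rtranclp)
qed

lemma reach_trans: "reach_in W E a b \<Longrightarrow> reach_in W E b c \<Longrightarrow> reach_in W E a c"
  unfolding reach_in_def by (rule rtranclp_trans)

lemma reach_in_W: "reach_in W E a b \<Longrightarrow> a \<in> W \<Longrightarrow> b \<in> W"
  unfolding reach_in_def by (induction rule: rtranclp_induct) auto

lemma comp_sub: assumes c: "is_component W E H" shows "H \<subseteq> W"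
proof
  fix z assume z: "z \<in> H"
  obtain u where u: "u \<in> W" "H = {v. reach_in W E u v}" using c unfolding is_component_def by blast
  then have "reach_in W E u z" using z by blast
  then show "z \<in> W" using reach_in_W u(1) by metis
qed

lemma comp_closed: "is_component W E H \<Longrightarrow> a \<in> H \<Longrightarrow> E a b \<Longrightarrow> b \<in> W \<Longrightarrow> b \<in> H"
proof -
  assume c: "is_component W E H" and a: "a \<in> H" "E a b" "b \<in> W"
  then obtain u where u: "u \<in> W" "H = {v. reach_in W E u v}" unfolding is_component_def by blast
  have "a \<in> W" using comp_sub[OF c] a by blast
  then have ab: "reach_in W E a b" using a unfolding reach_in_def by auto
  have "reach_in W E u a" using u(2) a(1) by blast
  then have "reach_in W E u b" using ab by (rule reach_trans)
  then show "b \<in> H" using u(2) by blast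
qed

lemma comp_reach: "\<forall>a b. E a b \<longrightarrow> E b a \<Longrightarrow> is_component W E H \<Longrightarrow> a \<in> H \<Longrightarrow> b \<in> H \<Longrightarrow> reach_in W E a b"
proof -
  assume sym: "\<forall>a b. E a b \<longrightarrow> E b a" and c: "is_component W E H" and ab: "a \<in> H" "b \<in> H"
  then obtain u where u: "u \<in> W" "H = {v. reach_in W E u v}" unfolding is_component_def by blast
  have "reach_in W E u a" "reach_in W E u b" using u(2) ab by blast+
  then have "reach_in W E a u" using reach_sym[OF sym] by metis
  then show ?thesis using \<open>reach_in W E u b\<close> by (rule reach_trans)
qed

lemma comp_disj:
  assumes sym: "\<forall>a b. E a b \<longrightarrow> E b a" and "is_component W E H" "is_component W E H'" "H \<noteq> H'"
  shows "H \<inter> H' = {}"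
proof (rule ccontr)
  assume "H \<inter> H' \<noteq> {}"
  then obtain z where z: "z \<in> H" "z \<in> H'" by blast
  obtain u where u: "H = {v. reach_in W E u v}" using assms(2) unfolding is_component_def by blast
  obtain u' where u': "H' = {v. reach_in W E u' v}" using assms(3) unfolding is_component_def by blast
  have "H = H'"
  proof (intro set_eqI iffI)
    fix v assume "v \<in> H"
    then have "reach_in W E z v" using comp_reach[OF sym assms(2) z(1)] by blast
    moreover have "reach_in W E u' z" using u' z(2) by blast
    ultimately have "reach_in W E u' v" using reach_trans by metis
    then show "v \<in> H'" using u' by blast
  next
    fix v assume "v \<in> H'"
    then have "reach_in W E z v" using comp_reach[OF sym assms(3) z(2)] by blast
    moreover have "reach_in W E u z" using u z(1) by blast
    ultimately have "reach_in W E u v" using reach_trans by metis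
    then show "v \<in> H" using u by blast
  qed
  then show False using assms(4) by simp
qed

lemma get_path:
  assumes sym: "\<forall>a b. E a b \<longrightarrow> E b a" and c: "is_component W E H"
    and st: "s \<notin> W" "t \<notin> W" "s \<noteq> t" and n: "\<exists>h\<in>H. E s h" "\<exists>h\<in>H. E t h"
  shows "\<exists>p. ipath E H s t p"
proof -
  obtain a where a: "a \<in> H" "E s a" using n by blast
  obtain b where b: "b \<in> H" "E t b" using n by blast
  have "reach_in W E a b" using comp_reach[OF sym c a(1) b(1)] .
  from reach_walk[OF this] obtain q where q: "q \<noteq> []" "q!0 = a" "q!(length q - 1) = b" "walk E q" "\<forall>z\<in>set q. reach_in W E a z"
    by blast
  have sq: "set q \<subseteq> H"
  proof
    fix z assume "z \<in> set q"
    then have az: "reach_in W E a z" using q by blast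
    obtain u where u: "H = {v. reach_in W E u v}" using c unfolding is_component_def by blast
    have "reach_in W E u a" using u a(1) by blast
    then have "reach_in W E u z" using az by (rule reach_trans)
    then show "z \<in> H" using u by blast
  qed
  have sH: "s \<notin> H" and tH: "t \<notin> H" using comp_sub[OF c] st by auto
  have bt: "E b t" using b sym by blast
  show ?thesis by (rule exists_ipath[OF st(3) sH tH a(2) bt q(4) q(1) q(2) q(3) sq])
qed

lemma ipath_V: "ipath E W x y p \<Longrightarrow> W \<subseteq> V \<Longrightarrow> x \<in> V \<Longrightarrow> y \<in> V \<Longrightarrow> set p \<subseteq> V"
proof
  fix z assume ip: "ipath E W x y p" and V: "W \<subseteq> V" "x \<in> V" "y \<in> V" and z: "z \<in> set p"
  then obtain k where k: "k < length p" "z = p!k" by (auto simp: in_set_conv_nth)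
  have "k = 0 \<or> k = length p - 1 \<or> (0 < k \<and> k < length p - 1)" using k by linarith
  moreover have "p!0 = x" "p!(length p - 1) = y" using ipathD[OF ip] by auto
  ultimately show "z \<in> V" using ipathD(5)[OF ip] V k by auto
qed

lemma ipath_parity:
  assumes "ipath E W x y p" "\<forall>a b. E a b \<longrightarrow> (a\<in>X \<longleftrightarrow> b\<notin>X)"
  shows "(y \<in> X \<longleftrightarrow> (x \<in> X \<longleftrightarrow> even (length p - 1)))"
proof -
  have "walk E p" "p!0 = x" "p!(length p - 1) = y" "3 \<le> length p"
    using ipathD[OF assms(1)] by auto
  then show ?thesis using walk_parity[OF _ assms(2), of p "length p - 1"] by auto
qed


lemma core:
  assumes sym: "\<forall>a b. E a b \<longrightarrow> E b a" and irr: "\<forall>a. \<not> E a a"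
    and bipX: "\<forall>a b. E a b \<longrightarrow> (a\<in>X \<longleftrightarrow> b\<notin>X)"
    and nc: "\<not> has_induced_long_even_cycle V E"
    and cH: "is_component (V - S) E H" and cH': "is_component (V - S) E H'"
    and disj: "H \<inter> H' = {}" and noe: "\<forall>a\<in>H. \<forall>b\<in>H'. \<not> E a b" and SV: "S \<subseteq> V"
    and nb: "\<forall>s\<in>S. (\<exists>h\<in>H. E s h) \<and> (\<exists>h\<in>H'. E s h)"
    and u: "u \<in> S" and v: "v \<in> S" and uv: "u \<noteq> v"
  shows "(u \<in> X \<longleftrightarrow> v \<in> X) \<Longrightarrow> (\<exists>w\<in>H. E u w \<and> E v w)"
    and "(u \<in> X \<longleftrightarrow> v \<notin> X) \<Longrightarrow> E u v"
proof -
  have HV: "H \<subseteq> V - S" "H' \<subseteq> V - S" using comp_sub cH cH' by auto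
  obtain p where p: "ipath E H u v p" using get_path[OF sym cH _ _ uv] u v nb by blast
  obtain q where q: "ipath E H' v u q" using get_path[OF sym cH' _ _ uv[symmetric]] u v nb by blast
  have lp: "3 \<le> length p" "3 \<le> length q" using ipathD(2)[OF p] ipathD(2)[OF q] by auto
  have pp: "(v \<in> X \<longleftrightarrow> (u \<in> X \<longleftrightarrow> even (length p - 1)))" using ipath_parity[OF p bipX] .
  have qp: "(u \<in> X \<longleftrightarrow> (v \<in> X \<longleftrightarrow> even (length q - 1)))" using ipath_parity[OF q bipX] .
  have noe': "\<forall>a\<in>H. \<forall>b\<in>H'. \<not> E a b" using noe by blast
  have nin: "u \<notin> H" "u \<notin> H'" "v \<notin> H" "v \<notin> H'" using HV u v by auto
  have inV: "H \<subseteq> V" "H' \<subseteq> V" "u \<in> V" "v \<in> V" using HV u v SV by auto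
  have gl: "has_induced_long_even_cycle V E" if "\<not> E u v" "even (length p + length q)" "8 \<le> length p + length q"
    by (rule glue[OF p q that(1) disj noe' nin(1,2) nin(3,4) that(2,3) inV sym irr])
  show "\<exists>w\<in>H. E u w \<and> E v w" if same: "u \<in> X \<longleftrightarrow> v \<in> X"
  proof (rule ccontr)
    assume nw: "\<not> (\<exists>w\<in>H. E u w \<and> E v w)"
    have evp: "even (length p - 1)" "even (length q - 1)" using pp qp same by auto
    have "length p \<noteq> 3"
    proof
      assume l: "length p = 3"
      have w: "\<forall>k. Suc k < length p \<longrightarrow> E (p!k) (p!Suc k)" using ipathD(1)[OF p] unfolding walk_def .
      have "E (p!1) (p!Suc 1)" using w l by simp
      then have "E (p!1) (p!2)" by (simp add: numeral_2_eq_2)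
      moreover have "E (p!0) (p!1)" using w l by simp
      moreover have "p!1 \<in> H" using ipathD(5)[OF p, of 1] l by simp
      moreover have "p!0 = u" "p!2 = v" using ipathD(3,4)[OF p] l by auto
      ultimately have "p!1 \<in> H" "E (p!0) (p!1)" "E (p!1) (p!2)" "p!0 = u" "p!2 = v" by auto
      then show False using nw sym by blast
    qed
    then have "5 \<le> length p" using evp lp by presburger
    moreover have "\<not> E u v" using bipX same by blast
    moreover have "even (length p + length q)" using evp lp by presburger
    ultimately show False using gl nc lp by linarith
  qed
  show "E u v" if diff: "u \<in> X \<longleftrightarrow> v \<notin> X"
  proof (rule ccontr)
    assume ne: "\<not> E u v"
    have "odd (length p - 1)" "odd (length q - 1)" using pp qp diff by auto
    then have "4 \<le> length p" "4 \<le> length q" using lp by presburger+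
    moreover have "even (length p + length q)" using \<open>odd (length p - 1)\<close> \<open>odd (length q - 1)\<close> lp by presburger
    ultimately show False using gl ne nc by linarith
  qed
qed

lemma ipath_ind: "ipath E W x y p \<Longrightarrow> i < j \<Longrightarrow> j < length p \<Longrightarrow> \<not>(i = 0 \<and> j = length p - 1) \<Longrightarrow> (E (p!i) (p!j) \<longleftrightarrow> j = Suc i)"
  unfolding ipath_def by blast

lemma ipath4:
  assumes ip: "ipath E W x y p" and l: "length p = 4"
  shows "p!1 \<in> W" "p!2 \<in> W" "E x (p!1)" "E (p!1) (p!2)" "E (p!2) y" "\<not> E x (p!2)" "\<not> E (p!1) y"
    "x \<noteq> p!1" "x \<noteq> p!2" "p!1 \<noteq> p!2" "p!1 \<noteq> y" "p!2 \<noteq> y"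
proof -
  have w: "\<forall>k. Suc k < length p \<longrightarrow> E (p!k) (p!Suc k)" using ipathD(1)[OF ip] unfolding walk_def .
  have p0: "p!0 = x" and p3: "p!3 = y" using ipathD(3,4)[OF ip] l by auto
  have e0: "E (p!0) (p!Suc 0)" using w l by simp
  have e1: "E (p!1) (p!Suc 1)" using w l by simp
  have e2: "E (p!2) (p!Suc 2)" using w[rule_format, of 2] l by simp
  show "E x (p!1)" using e0 p0 by simp
  show "E (p!1) (p!2)" using e1 by (simp add: numeral_2_eq_2)
  show "E (p!2) y" using e2 p3 by (simp add: numeral_3_eq_3)
  show "p!1 \<in> W" "p!2 \<in> W" using ipathD(5)[OF ip] l by auto
  show "\<not> E x (p!2)" using ipath_ind[OF ip, of 0 2] l p0 by simp
  show "\<not> E (p!1) y" using ipath_ind[OF ip, of 1 3] l p3 by simp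
  have d: "distinct p" using ipathD(6)[OF ip] .
  have ne: "\<And>i j. i < 4 \<Longrightarrow> j < 4 \<Longrightarrow> i \<noteq> j \<Longrightarrow> p!i \<noteq> p!j" using d l by (simp add: nth_eq_iff_index_eq)
  show "x \<noteq> p!1" "x \<noteq> p!2" "p!1 \<noteq> p!2" "p!1 \<noteq> y" "p!2 \<noteq> y"
    using ne[of 0 1] ne[of 0 2] ne[of 1 2] ne[of 1 3] ne[of 2 3] p0 p3 by auto
qed

lemma pos_core:
  assumes sym: "\<forall>a b. E a b \<longrightarrow> E b a" and irr: "\<forall>a. \<not> E a a"
    and bipX: "\<forall>a b. E a b \<longrightarrow> (a\<in>X \<longleftrightarrow> b\<notin>X)"
    and nc: "\<not> has_induced_long_even_cycle V E" and nD: "\<not> has_induced_D V E sg"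
    and cH: "is_component (V - S) E H" and cH': "is_component (V - S) E H'"
    and disj: "H \<inter> H' = {}" and noe: "\<forall>a\<in>H. \<forall>b\<in>H'. \<not> E a b" and SV: "S \<subseteq> V"
    and nb: "\<forall>s\<in>S. (\<exists>h\<in>H. E s h) \<and> (\<exists>h\<in>H'. E s h)"
    and x: "x \<in> S" and y: "y \<in> S" and e: "E x y" and xX: "x \<in> X"
  shows "sg x y"
proof (rule ccontr)
  assume ns: "\<not> sg x y"
  have xy: "x \<noteq> y" using e irr by blast
  have HV: "H \<subseteq> V - S" "H' \<subseteq> V - S" using comp_sub cH cH' by auto
  have yX: "y \<notin> X" using bipX e xX by blast
  obtain p where p: "ipath E H x y p" using get_path[OF sym cH _ _ xy] x y nb by blast
  obtain q where q: "ipath E H' x y q" using get_path[OF sym cH' _ _ xy] x y nb by blast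
  have lp: "3 \<le> length p" "3 \<le> length q" using ipathD(2)[OF p] ipathD(2)[OF q] by auto
  have op: "odd (length p - 1)" using ipath_parity[OF p bipX] xX yX by auto
  have oq: "odd (length q - 1)" using ipath_parity[OF q bipX] xX yX by auto
  have pV: "set p \<subseteq> V" using ipath_V[OF p] HV x y SV by blast
  have qV: "set q \<subseteq> V" using ipath_V[OF q] HV x y SV by blast
  have p4: "length p = 4"
  proof (rule ccontr)
    assume "length p \<noteq> 4"
    then have "6 \<le> length p" "even (length p)" using op lp by presburger+
    then show False using cycle_closed[OF p e _ _ pV sym irr] nc by blast
  qed
  have q4: "length q = 4"
  proof (rule ccontr)
    assume "length q \<noteq> 4"
    then have "6 \<le> length q" "even (length q)" using oq lp by presburger+
    then show False using cycle_closed[OF q e _ _ qV sym irr] nc by blast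
  qed
  note P = ipath4[OF p p4] and Q = ipath4[OF q q4]
  have nin: "x \<notin> H" "x \<notin> H'" "y \<notin> H" "y \<notin> H'" using HV x y by auto
  have "has_induced_D V E sg"
    unfolding has_induced_D_def
  proof (rule exI[of _ "p!2"], rule exI[of _ x], rule exI[of _ "q!2"], rule exI[of _ "p!1"], rule exI[of _ y], rule exI[of _ "q!1"], intro conjI)
    have "p!2 \<in> V" "p!1 \<in> V" "q!2 \<in> V" "q!1 \<in> V" "x \<in> V" "y \<in> V" using P(1,2) Q(1,2) HV x y SV by auto
    then show "{p!2, x, q!2, p!1, y, q!1} \<subseteq> V" by simp
    have d1: "p!1 \<noteq> q!1" "p!1 \<noteq> q!2" "p!2 \<noteq> q!1" "p!2 \<noteq> q!2" using P(1,2) Q(1,2) disj by auto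
    have d2: "x \<noteq> q!1" "x \<noteq> q!2" "y \<noteq> p!1" "y \<noteq> p!2" "y \<noteq> q!1" "y \<noteq> q!2"
      using P(1,2) Q(1,2) nin by blast+
    have "p!2 \<noteq> x" "p!2 \<noteq> q!2" "p!2 \<noteq> p!1" "p!2 \<noteq> y" "p!2 \<noteq> q!1"
      using P(9) P(10) P(12) d1(3,4) by (simp_all add: eq_commute)
    moreover have "x \<noteq> q!2" "x \<noteq> p!1" "x \<noteq> y" "x \<noteq> q!1" using d2(1,2) P(8) xy by simp_all
    moreover have "q!2 \<noteq> p!1" "q!2 \<noteq> y" "q!2 \<noteq> q!1" using d1(2) d2(6) Q(10) by (simp_all add: eq_commute)
    moreover have "p!1 \<noteq> y" "p!1 \<noteq> q!1" "y \<noteq> q!1" using P(11) d1(1) d2(5) by simp_all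
    ultimately show "distinct [p!2, x, q!2, p!1, y, q!1]" by simp
    show "E (p!2) (p!1)" using P(4) sym by blast
    show "E (p!2) y" using P(5) .
    show "E x (p!1)" using P(3) .
    show "E x y" using e .
    show "E x (q!1)" using Q(3) .
    show "E (q!2) y" using Q(5) .
    show "E (q!2) (q!1)" using Q(4) sym by blast
    show "\<not> E (p!2) (q!1)" using P(2) Q(1) noe by blast
    show "\<not> E (q!2) (p!1)" using P(1) Q(2) noe sym by blast
    show "\<not> E (p!2) x" using P(6) sym by blast
    show "\<not> E (p!2) (q!2)" using P(2) Q(2) noe by blast
    show "\<not> E x (q!2)" using Q(6) .
    show "\<not> E (p!1) y" using P(7) .
    show "\<not> E (p!1) (q!1)" using P(1) Q(1) noe by blast
    show "\<not> E y (q!1)" using Q(7) sym by blast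
    show "\<not> sg x y" using ns .
  qed
  then show False using nD by blast
qed


theorem lemma4p1:
  fixes V X Y S H H' :: "'a set" and E sg :: "'a \<Rightarrow> 'a \<Rightarrow> bool"
  assumes "signed_bigraph V X Y E sg"
    and "separable V E"
    and "\<not> has_induced_long_even_cycle V E"
    and "\<not> has_induced_D V E sg"
    and "minimally_separates V E S H H'"
  shows "positive_biclique X Y E sg S \<and>
    (\<forall>u \<in> S. \<forall>v \<in> S. u \<noteq> v \<and> ((u \<in> X \<and> v \<in> X) \<or> (u \<in> Y \<and> v \<in> Y)) \<longrightarrow>
       (\<exists>w \<in> H. E u w \<and> E v w) \<and> (\<exists>w \<in> H'. E u w \<and> E v w))"
proof -
  have VXY: "V = X \<union> Y" "X \<inter> Y = {}"
    and Ep: "\<forall>x y. E x y \<longrightarrow> x \<in> V \<and> y \<in> V \<and> x \<noteq> y \<and> E y x \<and> sg x y = sg y x"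
    and EXY: "\<forall>x y. E x y \<longrightarrow> (x \<in> X \<longleftrightarrow> y \<in> Y)"
    using assms(1) unfolding signed_bigraph_def by blast+
  have sym: "\<forall>a b. E a b \<longrightarrow> E b a" using Ep by blast
  have irr: "\<forall>a. \<not> E a a" using Ep by blast
  have sgs: "\<forall>a b. E a b \<longrightarrow> sg a b = sg b a" using Ep by blast
  have bipX: "\<forall>a b. E a b \<longrightarrow> (a\<in>X \<longleftrightarrow> b\<notin>X)"
  proof (intro allI impI)
    fix a b assume "E a b"
    then have "b \<in> V" "(a \<in> X \<longleftrightarrow> b \<in> Y)" using Ep EXY by blast+
    then show "a\<in>X \<longleftrightarrow> b\<notin>X" using VXY by blast
  qed
  have SV: "S \<subseteq> V" and cH: "is_component (V - S) E H" and cH': "is_component (V - S) E H'"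
    and HH: "H \<noteq> H'" and nb: "\<forall>s\<in>S. (\<exists>h\<in>H. E s h) \<and> (\<exists>h\<in>H'. E s h)"
    using assms(5) unfolding minimally_separates_def by blast+
  have disj: "H \<inter> H' = {}" using comp_disj[OF sym cH cH' HH] .
  have disj2: "H' \<inter> H = {}" using disj by blast
  have noe: "\<forall>a\<in>H. \<forall>b\<in>H'. \<not> E a b"
  proof (intro ballI notI)
    fix a b assume ab: "a \<in> H" "b \<in> H'" "E a b"
    have "b \<in> V - S" using comp_sub[OF cH'] ab(2) by blast
    then have "b \<in> H" using comp_closed[OF cH ab(1) ab(3)] by blast
    then show False using disj ab(2) by blast
  qed
  have noe2: "\<forall>a\<in>H'. \<forall>b\<in>H. \<not> E a b" using noe sym by blast
  have nb2: "\<forall>s\<in>S. (\<exists>h\<in>H'. E s h) \<and> (\<exists>h\<in>H. E s h)" using nb by blast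
  note C1 = core[OF sym irr bipX assms(3) cH cH' disj noe SV nb]
  note C2 = core[OF sym irr bipX assms(3) cH' cH disj2 noe2 SV nb2]
  have bic: "\<forall>x\<in>S \<inter> X. \<forall>y\<in>S \<inter> Y. E x y"
  proof (intro ballI)
    fix x y assume x: "x \<in> S \<inter> X" and y: "y \<in> S \<inter> Y"
    then have "x \<noteq> y" "x \<in> X \<longleftrightarrow> y \<notin> X" using VXY by blast+
    then show "E x y" using C1(2)[of x y] x y by blast
  qed
  have pos: "\<forall>x\<in>S. \<forall>y\<in>S. E x y \<longrightarrow> sg x y"
  proof (intro ballI impI)
    fix x y assume x: "x \<in> S" and y: "y \<in> S" and e: "E x y"
    show "sg x y"
    proof (cases "x \<in> X")
      case True
      then show ?thesis using pos_core[OF sym irr bipX assms(3,4) cH cH' disj noe SV nb x y e] by blast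
    next
      case False
      then have "y \<in> X" using bipX e by blast
      moreover have "E y x" using sym e by blast
      ultimately have "sg y x" using pos_core[OF sym irr bipX assms(3,4) cH cH' disj noe SV nb y x] by blast
      then show ?thesis using sgs e by blast
    qed
  qed
  have com: "\<forall>u \<in> S. \<forall>v \<in> S. u \<noteq> v \<and> ((u \<in> X \<and> v \<in> X) \<or> (u \<in> Y \<and> v \<in> Y)) \<longrightarrow>
       (\<exists>w \<in> H. E u w \<and> E v w) \<and> (\<exists>w \<in> H'. E u w \<and> E v w)"
  proof (intro ballI impI)
    fix u v assume u: "u \<in> S" and v: "v \<in> S" and h: "u \<noteq> v \<and> ((u \<in> X \<and> v \<in> X) \<or> (u \<in> Y \<and> v \<in> Y))"
    then have uv: "u \<noteq> v" and same: "u \<in> X \<longleftrightarrow> v \<in> X" using VXY by blast+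
    show "(\<exists>w \<in> H. E u w \<and> E v w) \<and> (\<exists>w \<in> H'. E u w \<and> E v w)"
      using C1(1)[OF u v uv same] C2(1)[OF u v uv same] by blast
  qed
  show ?thesis unfolding positive_biclique_def using bic pos com by blast
qed

end
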